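(* Let $\mathbb G$ be a special 2-group and $(n,\rho,\beta,c)$, $(n',\rho',\beta',c')$ admissible quadruples. If $(\mathbf R,s):n\to n'$ is the 1-morphism of $\mathbf{2Mat}_{\mathbb C}$ underlying a 1-intertwiner $\mathcal F(n,\rho,\beta,c)\to\mathcal F(n',\rho',\beta',c')$, then (i) $\mathbf R$ is $(\rho,\rho')$-invariant, i.e. $R_{\rho'(g)(i'),\rho(g)(i)}=R_{i'i}$ for all $i',i$ and $g\in\pi_0(\mathbb G)$; and (ii) $\mathrm{Sup}(\mathbf R)\subseteq I(\beta,\beta')$. In particular the support of any 1-intertwiner is a union of intertwining $\pi_0(\mathbb G)$-orbits of $M(n',n)$. Consequently, if $I(\beta,\beta')=\emptyset$, the category of 1-intertwiners and 2-intertwiners from $\mathcal F(n,\rho,\beta,c)$ to $\mathcal F(n',\rho',\beta',c')$ is terminal.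
   Context: A special 2-group $\mathbb G$: skeletal monoidal groupoid, strictly invertible objects, $l,r$ identities; objects form $\pi_0(\mathbb G)$; $\pi_1(\mathbb G)=\mathrm{Aut}(e)$ is a $\pi_0(\mathbb G)$-module via $g\cdot u=\gamma_g^{-1}(\delta_g(u))$, $\gamma_g(u)=u\otimes\mathrm{id}_g$, $\delta_g(u)=\mathrm{id}_g\otimes u$; canonical 3-cocycle $\alpha(g_1,g_2,g_3)=\gamma^{-1}_{g_1g_2g_3}(a_{g_1,g_2,g_3})$. $\mathbf{2Mat}_{\mathbb C}$: objects $n\ge0$; for $n,m\ge1$ a 1-morphism $n\to m$ is $(\mathbf R,s)$, $\mathbf R$ an $m\times n$ matrix over $\mathbb N$, $s=(s_i)$ a gauge with $s_i(\mathbf a)\in GL((\mathbf R\mathbf a)_i,\mathbb C)$ for $\mathbf a\in\mathbb N^n$ ($=1$ if $(\mathbf R\mathbf a)_i=0$), $s_i(\mathbf e_j)=\mathbf I_{R_{ij}}$; a 2-morphism $(\mathbf R,s)\Rightarrow(\mathbf R',s')$ is an $m\times n$ array with $(i,j)$ entry an $R'_{ij}\times R_{ij}$ complex matrix if $R_{ij},R'_{ij}\ne0$, empty otherwise; vertical composition entrywise product; composition $(\tilde{\mathbf R},\tilde s)\circ(\mathbf R,s)=(\tilde{\mathbf R}\mathbf R,\tilde s\ast s)$, $(\tilde s\ast s)_k(\mathbf a)=\tilde s_k(\mathbf R\mathbf a)\big(\bigoplus_{i}\mathbf I_{\tilde R_{ki}}\otimes s_i(\mathbf a)\big)\mathbf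 P(\tilde{\mathbf R}_k,\mathbf R,\mathbf a)\big(\bigoplus_j \tilde s_k(\mathbf R\mathbf e_j)^{-1}\otimes\mathbf I_{a_j}\big)$, $\mathbf P(\cdot)$ fixed permutation matrices of the construction (identities when $\tilde{\mathbf R}_k$ or $\mathbf a$ is a standard basis vector, $\mathbf R$ an identity, or $\mathbf R$ one column); horizontal composition $(\tilde{\mathsf T}\circ\mathsf T)_{kj}=\tilde s'_k(\mathbf R'\mathbf e_j)\big(\bigoplus_i\tilde{\mathsf T}_{ki}\otimes\mathsf T_{ij}\big)\tilde s_k(\mathbf R\mathbf e_j)^{-1}$; identities $(\mathbf I_n,\mathbf I)$ with trivial gauge $\mathbf I$. Representations: a 2-matrix representation is $(n,\mathbb F)$ with $\mathbb F=(F,F_2,F_0):\mathbb G\to\mathsf{Equiv}_{\mathbf{2Mat}_{\mathbb C}}(n)$ monoidal; a 1-intertwiner $(n,\mathbb F)\to(n',\mathbb F')$ is $(f,\Phi)$, $f:n\to n'$, invertible $\Phi(A):F'(A)\circ f\Rightarrow f\circ F(A)$ natural in $A$, with $\Phi(A\otimes B)\cdot(F'_2(A,B)\circ1_f)=(1_f\circ F_2(A,B))\cdot(\Phi(A)\circ1_{F(B)})\cdot(1_{F'(A)}\circ\Phi(B))$ and $F'_0\circ1_f=(1_f\circ F_0)\cdot\Phi(I)$; a 2-intertwiner $(f,\Phi)\Rightarrow(g,\Psi)$ is $\tau:f\Rightarrow g$ with $\Psi(A)\cdot(1_{F'(A)}\circ\tau)=(\tau\circ1_{F(A)})\cdot\Phi(A)$.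 $\mathbf P(\sigma)_{ij}=\delta_{i,\sigma(j)}$; $(\sigma\cdot\boldsymbol\lambda)_i=\lambda_{\sigma^{-1}(i)}$. Admissible quadruple $(n,\rho,\beta,c)$: $n\ge1$, $\rho:\pi_0(\mathbb G)\to S_n$ homomorphism, $\beta:\pi_1(\mathbb G)\to(\mathbb C^* )^n_\rho$ module homomorphism with $[\beta\circ\alpha]=0$, $c$ normalized 2-cochain in $(\mathbb C^* )^n_\rho$ with $\partial c=\beta\circ\alpha$. $\mathcal F(n,\rho,\beta,c)=(n,\mathbb F)$ with $F(g)=(\mathbf P(\rho(g)),\mathbf I)$, $F(\varphi)$ for $\varphi\in\mathrm{Aut}(g)$ having only nonempty entries $\beta(\gamma_g^{-1}\varphi)_{\rho(g)(j)}$ at $(\rho(g)(j),j)$, $F_2(g_1,g_2)$ with only nonempty entries $c(g_1,g_2)_{\rho(g_1g_2)(j)}$ at $(\rho(g_1g_2)(j),j)$, $F_0$ identity. $M(n',n)=\{1..n'\}\times\{1..n\}$, right action $(i',i)\cdot g=(\rho'(g)^{-1}(i'),\rho(g)^{-1}(i))$; $I(\beta,\beta')=\{(i',i):\beta'_{i'}=\beta_i\}$; an orbit is intertwining if contained in $I(\beta,\beta')$; $\mathrm{Sup}(\mathbf R)=\{(i',i):R_{i'i}\ne0\}$. A category is terminal if it has one object and one morphism. *)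

theory Defs
  imports Complex_Main "Jordan_Normal_Form.Matrix" "HOL-Combinatorics.Permutations"
begin

text \<open>A skeletal monoidal groupoid: objects are the elements of type 'g, morphisms live
in type 'm; since the groupoid is skeletal every morphism is an automorphism, and
aut g is the set of automorphisms of the object g.\<close>

record ('g,'m) two_group =
  omul :: "'g \<Rightarrow> 'g \<Rightarrow> 'g"
  oone :: 'g
  oinv :: "'g \<Rightarrow> 'g"
  aut :: "'g \<Rightarrow> 'm set"
  mcomp :: "'m \<Rightarrow> 'm \<Rightarrow> 'm"
  mid :: "'g \<Rightarrow> 'm"
  mtens :: "'m \<Rightarrow> 'm \<Rightarrow> 'm"
  massoc :: "'g \<Rightarrow> 'g \<Rightarrow> 'g \<Rightarrow> 'm"

definition special_2group :: "('g,'m) two_group \<Rightarrow> bool" where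
  "special_2group G \<longleftrightarrow>
    \<comment> \<open>objects: strictly associative, strict unit, strictly invertible objects\<close>
    (\<forall>x y z. omul G (omul G x y) z = omul G x (omul G y z)) \<and>
    (\<forall>x. omul G (oone G) x = x \<and> omul G x (oone G) = x) \<and>
    (\<forall>x. omul G x (oinv G x) = oone G \<and> omul G (oinv G x) x = oone G) \<and>
    \<comment> \<open>skeletal groupoid\<close>
    (\<forall>x y. x \<noteq> y \<longrightarrow> aut G x \<inter> aut G y = {}) \<and>
    (\<forall>x. mid G x \<in> aut G x) \<and>
    (\<forall>x. \<forall>\<phi>\<in>aut G x. \<forall>\<psi>\<in>aut G x. mcomp G \<psi> \<phi> \<in> aut G x) \<and>
    (\<forall>x. \<forall>\<phi>\<in>aut G x. \<forall>\<psi>\<in>aut G x. \<forall>\<chi>\<in>aut G x.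
        mcomp G \<chi> (mcomp G \<psi> \<phi>) = mcomp G (mcomp G \<chi> \<psi>) \<phi>) \<and>
    (\<forall>x. \<forall>\<phi>\<in>aut G x. mcomp G (mid G x) \<phi> = \<phi> \<and> mcomp G \<phi> (mid G x) = \<phi>) \<and>
    (\<forall>x. \<forall>\<phi>\<in>aut G x. \<exists>\<psi>\<in>aut G x. mcomp G \<psi> \<phi> = mid G x \<and> mcomp G \<phi> \<psi> = mid G x) \<and>
    \<comment> \<open>tensor product is a functor\<close>
    (\<forall>x y. \<forall>\<phi>\<in>aut G x. \<forall>\<psi>\<in>aut G y. mtens G \<phi> \<psi> \<in> aut G (omul G x y)) \<and>
    (\<forall>x y. mtens G (mid G x) (mid G y) = mid G (omul G x y)) \<and>
    (\<forall>x y. \<forall>\<phi>\<in>aut G x. \<forall>\<phi>'\<in>aut G x. \<forall>\<psi>\<in>aut G y. \<forall>\<psi>'\<in>aut G y.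
        mtens G (mcomp G \<phi>' \<phi>) (mcomp G \<psi>' \<psi>) = mcomp G (mtens G \<phi>' \<psi>') (mtens G \<phi> \<psi>)) \<and>
    \<comment> \<open>associator: natural isomorphism satisfying the pentagon\<close>
    (\<forall>x y z. massoc G x y z \<in> aut G (omul G (omul G x y) z)) \<and>
    (\<forall>x y z. \<forall>\<phi>\<in>aut G x. \<forall>\<psi>\<in>aut G y. \<forall>\<chi>\<in>aut G z.
        mcomp G (massoc G x y z) (mtens G (mtens G \<phi> \<psi>) \<chi>)
        = mcomp G (mtens G \<phi> (mtens G \<psi> \<chi>)) (massoc G x y z)) \<and>
    (\<forall>w x y z.
        mcomp G (mtens G (mid G w) (massoc G x y z))
          (mcomp G (massoc G w (omul G x y) z) (mtens G (massoc G w x y) (mid G z)))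
        = mcomp G (massoc G w x (omul G y z)) (massoc G (omul G w x) y z)) \<and>
    \<comment> \<open>left and right unitors are identities (naturality and triangle axiom)\<close>
    (\<forall>x. \<forall>\<phi>\<in>aut G x. mtens G (mid G (oone G)) \<phi> = \<phi> \<and> mtens G \<phi> (mid G (oone G)) = \<phi>) \<and>
    (\<forall>x y. mcomp G (mtens G (mid G x) (mid G y)) (massoc G x (oone G) y)
             = mtens G (mid G x) (mid G y))"

definition pi1 :: "('g,'m) two_group \<Rightarrow> 'm set" where
  "pi1 G = aut G (oone G)"

definition gam :: "('g,'m) two_group \<Rightarrow> 'g \<Rightarrow> 'm \<Rightarrow> 'm" where
  "gam G g u = mtens G u (mid G g)"

definition del :: "('g,'m) two_group \<Rightarrow> 'g \<Rightarrow> 'm \<Rightarrow> 'm" where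
  "del G g u = mtens G (mid G g) u"

definition gaminv :: "('g,'m) two_group \<Rightarrow> 'g \<Rightarrow> 'm \<Rightarrow> 'm" where
  "gaminv G g \<phi> = the_inv_into (pi1 G) (gam G g) \<phi>"

definition act :: "('g,'m) two_group \<Rightarrow> 'g \<Rightarrow> 'm \<Rightarrow> 'm" where
  "act G g u = gaminv G g (del G g u)"

definition alpha :: "('g,'m) two_group \<Rightarrow> 'g \<Rightarrow> 'g \<Rightarrow> 'g \<Rightarrow> 'm" where
  "alpha G g1 g2 g3 = gaminv G (omul G (omul G g1 g2) g3) (massoc G g1 g2 g3)"

text \<open>Indices are 0-based: \<open>{1..n}\<close> of the paper is \<open>{0..<n}\<close>. Elements of
\<open>(\<complex>\<^sup>*)\<^sup>n\<close> are functions \<open>nat \<Rightarrow> complex\<close>, only the values below n matter.\<close>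

definition coboundary :: "('g,'m) two_group \<Rightarrow> ('g \<Rightarrow> nat \<Rightarrow> nat)
     \<Rightarrow> ('g \<Rightarrow> 'g \<Rightarrow> nat \<Rightarrow> complex) \<Rightarrow> 'g \<Rightarrow> 'g \<Rightarrow> 'g \<Rightarrow> nat \<Rightarrow> complex" where
  "coboundary G \<rho> c g1 g2 g3 i =
     c g2 g3 (Hilbert_Choice.inv (\<rho> g1) i) * c g1 (omul G g2 g3) i / c (omul G g1 g2) g3 i / c g1 g2 i"

definition normalized_cochain :: "('g,'m) two_group \<Rightarrow> nat \<Rightarrow> ('g \<Rightarrow> 'g \<Rightarrow> nat \<Rightarrow> complex) \<Rightarrow> bool" where
  "normalized_cochain G n c \<longleftrightarrow>
     (\<forall>g h. \<forall>i<n. c g h i \<noteq> 0) \<and> (\<forall>g. \<forall>i<n. c (oone G) g i = 1 \<and> c g (oone G) i = 1)"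

definition admissible :: "('g,'m) two_group \<Rightarrow> nat \<Rightarrow> ('g \<Rightarrow> nat \<Rightarrow> nat)
     \<Rightarrow> ('m \<Rightarrow> nat \<Rightarrow> complex) \<Rightarrow> ('g \<Rightarrow> 'g \<Rightarrow> nat \<Rightarrow> complex) \<Rightarrow> bool" where
  "admissible G n \<rho> \<beta> c \<longleftrightarrow>
     n \<ge> 1 \<and>
     \<comment> \<open>\<rho> is a homomorphism into \<open>S\<^sub>n\<close>\<close>
     (\<forall>g. \<rho> g permutes {..<n}) \<and> (\<forall>g h. \<rho> (omul G g h) = \<rho> g \<circ> \<rho> h) \<and>
     \<comment> \<open>\<beta> is a module homomorphism \<open>\<pi>\<^sub>1 \<rightarrow> (\<complex>\<^sup>*)\<^sup>n\<^sub>\<rho>\<close>\<close>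
     (\<forall>u\<in>pi1 G. \<forall>i<n. \<beta> u i \<noteq> 0) \<and>
     (\<forall>u\<in>pi1 G. \<forall>v\<in>pi1 G. \<forall>i<n. \<beta> (mcomp G u v) i = \<beta> u i * \<beta> v i) \<and>
     (\<forall>g. \<forall>u\<in>pi1 G. \<forall>i<n. \<beta> (act G g u) i = \<beta> u (Hilbert_Choice.inv (\<rho> g) i)) \<and>
     \<comment> \<open>\<open>[\<beta>\<circ>\<alpha>] = 0\<close>\<close>
     (\<exists>c'. normalized_cochain G n c' \<and>
        (\<forall>g1 g2 g3. \<forall>i<n. coboundary G \<rho> c' g1 g2 g3 i = \<beta> (alpha G g1 g2 g3) i)) \<and>
     \<comment> \<open>c is normalized with \<open>\<partial>c = \<beta>\<circ>\<alpha>\<close>\<close>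
     normalized_cochain G n c \<and>
     (\<forall>g1 g2 g3. \<forall>i<n. coboundary G \<rho> c g1 g2 g3 i = \<beta> (alpha G g1 g2 g3) i)"

type_synonym gauge = "nat \<Rightarrow> nat vec \<Rightarrow> complex mat"
type_synonym mor1 = "nat mat \<times> gauge"
type_synonym arr = "nat \<Rightarrow> nat \<Rightarrow> complex mat"

definition permmat :: "nat \<Rightarrow> (nat \<Rightarrow> nat) \<Rightarrow> 'a :: zero_neq_one mat" where
  "permmat n \<sigma> = mat n n (\<lambda>(i,j). if i = \<sigma> j then 1 else 0)"

definition kron :: "'a :: semiring_0 mat \<Rightarrow> 'a mat \<Rightarrow> 'a mat" where
  "kron A B = mat (dim_row A * dim_row B) (dim_col A * dim_col B)
     (\<lambda>(i,j). A $$ (i div dim_row B, j div dim_col B) * B $$ (i mod dim_row B, j mod dim_col B))"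

fun block_diag :: "'a :: zero mat list \<Rightarrow> 'a mat" where
  "block_diag [] = 0\<^sub>m 0 0"
| "block_diag (A # As) = (let B = block_diag As in
     four_block_mat A (0\<^sub>m (dim_row A) (dim_col B)) (0\<^sub>m (dim_row B) (dim_col A)) B)"

definition matinv :: "complex mat \<Rightarrow> complex mat" where
  "matinv A = (SOME B. B \<in> carrier_mat (dim_row A) (dim_row A) \<and> inverts_mat A B \<and> inverts_mat B A)"

text \<open>1-morphisms \<open>n \<rightarrow> m\<close>: gauges are extensional (value \<open>1\<^sub>m 0\<close> outside their domain).\<close>

definition is_1mor :: "nat \<Rightarrow> nat \<Rightarrow> mor1 \<Rightarrow> bool" where
  "is_1mor n m f \<longleftrightarrow> (case f of (R, s) \<Rightarrow>
     R \<in> carrier_mat m n \<and>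
     (\<forall>i<m. \<forall>a\<in>carrier_vec n.
        s i a \<in> carrier_mat ((R *\<^sub>v a) $ i) ((R *\<^sub>v a) $ i) \<and> invertible_mat (s i a)) \<and>
     (\<forall>i<m. \<forall>j<n. s i (unit_vec n j) = 1\<^sub>m (R $$ (i,j))) \<and>
     (\<forall>i a. \<not> (i < m \<and> a \<in> carrier_vec n) \<longrightarrow> s i a = 1\<^sub>m 0))"

definition triv_gauge :: "nat mat \<Rightarrow> gauge" where
  "triv_gauge R i a = (if i < dim_row R \<and> a \<in> carrier_vec (dim_col R)
                       then 1\<^sub>m ((R *\<^sub>v a) $ i) else 1\<^sub>m 0)"

definition id1 :: "nat \<Rightarrow> mor1" where
  "id1 n = (1\<^sub>m n, triv_gauge (1\<^sub>m n))"

text \<open>The fixed permutation matrices \<open>P(R\<^sub>k, R, a)\<close> of the construction are a parameter PP,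
subject to the properties stated in the paper.\<close>

definition PP_ok :: "(nat vec \<Rightarrow> nat mat \<Rightarrow> nat vec \<Rightarrow> complex mat) \<Rightarrow> bool" where
  "PP_ok PP \<longleftrightarrow> (\<forall>m n rk R a. rk \<in> carrier_vec m \<longrightarrow> R \<in> carrier_mat m n \<longrightarrow> a \<in> carrier_vec n \<longrightarrow>
     (let d = rk \<bullet> (R *\<^sub>v a) in
       (\<exists>\<sigma>. \<sigma> permutes {..<d} \<and> PP rk R a = permmat d \<sigma>) \<and>
       ((\<exists>i<m. rk = unit_vec m i) \<or> (\<exists>j<n. a = unit_vec n j) \<or> (m = n \<and> R = 1\<^sub>m m) \<or> n = 1
          \<longrightarrow> PP rk R a = 1\<^sub>m d)))"

definition gauge_comp :: "(nat vec \<Rightarrow> nat mat \<Rightarrow> nat vec \<Rightarrow> complex mat)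
     \<Rightarrow> nat mat \<Rightarrow> gauge \<Rightarrow> nat mat \<Rightarrow> gauge \<Rightarrow> gauge" where
  "gauge_comp PP Rt st R s k a =
     (if k < dim_row Rt \<and> a \<in> carrier_vec (dim_col R) then
        st k (R *\<^sub>v a)
        * block_diag (map (\<lambda>i. kron (1\<^sub>m (Rt $$ (k,i))) (s i a)) [0..<dim_col Rt])
        * PP (row Rt k) R a
        * block_diag (map (\<lambda>j. kron (matinv (st k (col R j))) (1\<^sub>m (a $ j))) [0..<dim_col R])
      else 1\<^sub>m 0)"

text \<open>Composition of 1-morphisms: \<open>comp1 PP ft f = ft \<circ> f\<close>.\<close>

definition comp1 :: "(nat vec \<Rightarrow> nat mat \<Rightarrow> nat vec \<Rightarrow> complex mat) \<Rightarrow> mor1 \<Rightarrow> mor1 \<Rightarrow> mor1" where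
  "comp1 PP ft f = (fst ft * fst f, gauge_comp PP (fst ft) (snd ft) (fst f) (snd f))"

definition is_2mor :: "nat \<Rightarrow> nat \<Rightarrow> nat mat \<Rightarrow> nat mat \<Rightarrow> arr \<Rightarrow> bool" where
  "is_2mor m n R R' T \<longleftrightarrow>
     (\<forall>i j. (i < m \<and> j < n \<longrightarrow> T i j \<in> carrier_mat (R' $$ (i,j)) (R $$ (i,j))) \<and>
            (\<not> (i < m \<and> j < n) \<longrightarrow> T i j = 0\<^sub>m 0 0))"

definition id2 :: "nat mat \<Rightarrow> arr" where
  "id2 R i j = (if i < dim_row R \<and> j < dim_col R then 1\<^sub>m (R $$ (i,j)) else 0\<^sub>m 0 0)"

text \<open>Vertical composition \<open>vcomp T' T = T' \<cdot> T\<close> (first T, then T').\<close>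

definition vcomp :: "arr \<Rightarrow> arr \<Rightarrow> arr" where
  "vcomp T' T i j = T' i j * T i j"

definition inv2 :: "nat \<Rightarrow> nat \<Rightarrow> nat mat \<Rightarrow> nat mat \<Rightarrow> arr \<Rightarrow> bool" where
  "inv2 m n R R' T \<longleftrightarrow> (\<exists>T'. is_2mor m n R' R T' \<and> vcomp T' T = id2 R \<and> vcomp T T' = id2 R')"

text \<open>Horizontal composition of \<open>Tt : ft \<Rightarrow> ft'\<close> (outer) with \<open>T : f \<Rightarrow> f'\<close> (inner).\<close>

definition hcomp :: "mor1 \<Rightarrow> mor1 \<Rightarrow> mor1 \<Rightarrow> mor1 \<Rightarrow> arr \<Rightarrow> arr \<Rightarrow> arr" where
  "hcomp ft ft' f f' Tt T k j =
     (if k < dim_row (fst ft) \<and> j < dim_col (fst f) then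
        snd ft' k (col (fst f') j)
        * block_diag (map (\<lambda>i. kron (Tt k i) (T i j)) [0..<dim_col (fst ft)])
        * matinv (snd ft k (col (fst f) j))
      else 0\<^sub>m 0 0)"

text \<open>Data of a 2-matrix representation \<open>(n, (F, F\<^sub>2, F\<^sub>0))\<close>: robj g = F(g), rmor g \<phi> = F(\<phi>)
for \<open>\<phi> \<in> Aut(g)\<close>, rF2 g h = \<open>F\<^sub>2(g,h)\<close>, rF0 = \<open>F\<^sub>0\<close>.\<close>

record ('g,'m) rep2 =
  rdim :: nat
  robj :: "'g \<Rightarrow> mor1"
  rmor :: "'g \<Rightarrow> 'm \<Rightarrow> arr"
  rF2 :: "'g \<Rightarrow> 'g \<Rightarrow> arr"
  rF0 :: arr

definition Frep :: "('g,'m) two_group \<Rightarrow> nat \<Rightarrow> ('g \<Rightarrow> nat \<Rightarrow> nat)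
     \<Rightarrow> ('m \<Rightarrow> nat \<Rightarrow> complex) \<Rightarrow> ('g \<Rightarrow> 'g \<Rightarrow> nat \<Rightarrow> complex) \<Rightarrow> ('g,'m) rep2" where
  "Frep G n \<rho> \<beta> c =
     \<lparr> rdim = n,
       robj = (\<lambda>g. (permmat n (\<rho> g), triv_gauge (permmat n (\<rho> g)))),
       rmor = (\<lambda>g \<phi> i j. if i < n \<and> j < n \<and> i = \<rho> g j
                          then mat 1 1 (\<lambda>_. \<beta> (gaminv G g \<phi>) i) else 0\<^sub>m 0 0),
       rF2 = (\<lambda>g h i j. if i < n \<and> j < n \<and> i = \<rho> (omul G g h) j
                          then mat 1 1 (\<lambda>_. c g h i) else 0\<^sub>m 0 0),
       rF0 = id2 (1\<^sub>m n) \<rparr>"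

text \<open>1-intertwiners \<open>(f,\<Phi>) : X \<rightarrow> Y\<close>, with \<open>\<Phi>(A) : F'(A) \<circ> f \<Rightarrow> f \<circ> F(A)\<close>.\<close>

definition one_int :: "(nat vec \<Rightarrow> nat mat \<Rightarrow> nat vec \<Rightarrow> complex mat) \<Rightarrow> ('g,'m) two_group
     \<Rightarrow> ('g,'m) rep2 \<Rightarrow> ('g,'m) rep2 \<Rightarrow> mor1 \<Rightarrow> ('g \<Rightarrow> arr) \<Rightarrow> bool" where
  "one_int PP G X Y f \<Phi> \<longleftrightarrow>
     is_1mor (rdim X) (rdim Y) f \<and>
     (\<forall>A. is_2mor (rdim Y) (rdim X) (fst (robj Y A) * fst f) (fst f * fst (robj X A)) (\<Phi> A) \<and>
          inv2 (rdim Y) (rdim X) (fst (robj Y A) * fst f) (fst f * fst (robj X A)) (\<Phi> A)) \<and>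
     \<comment> \<open>naturality\<close>
     (\<forall>A. \<forall>\<phi>\<in>aut G A.
        vcomp (\<Phi> A) (hcomp (robj Y A) (robj Y A) f f (rmor Y A \<phi>) (id2 (fst f)))
        = vcomp (hcomp f f (robj X A) (robj X A) (id2 (fst f)) (rmor X A \<phi>)) (\<Phi> A)) \<and>
     \<comment> \<open>compatibility with \<open>F\<^sub>2\<close>\<close>
     (\<forall>A B.
        vcomp (\<Phi> (omul G A B))
          (hcomp (comp1 PP (robj Y A) (robj Y B)) (robj Y (omul G A B)) f f (rF2 Y A B) (id2 (fst f)))
        = vcomp (hcomp f f (comp1 PP (robj X A) (robj X B)) (robj X (omul G A B)) (id2 (fst f)) (rF2 X A B))
           (vcomp (hcomp (comp1 PP (robj Y A) f) (comp1 PP f (robj X A)) (robj X B) (robj X B)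
                     (\<Phi> A) (id2 (fst (robj X B))))
                  (hcomp (robj Y A) (robj Y A) (comp1 PP (robj Y B) f) (comp1 PP f (robj X B))
                     (id2 (fst (robj Y A))) (\<Phi> B)))) \<and>
     \<comment> \<open>compatibility with \<open>F\<^sub>0\<close>\<close>
     hcomp (robj Y (oone G)) (id1 (rdim Y)) f f (rF0 Y) (id2 (fst f))
       = vcomp (hcomp f f (robj X (oone G)) (id1 (rdim X)) (id2 (fst f)) (rF0 X)) (\<Phi> (oone G))"

definition two_int :: "(nat vec \<Rightarrow> nat mat \<Rightarrow> nat vec \<Rightarrow> complex mat)
     \<Rightarrow> ('g,'m) rep2 \<Rightarrow> ('g,'m) rep2 \<Rightarrow> mor1 \<times> ('g \<Rightarrow> arr) \<Rightarrow> mor1 \<times> ('g \<Rightarrow> arr) \<Rightarrow> arr \<Rightarrow> bool" where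
  "two_int PP X Y x y \<tau> \<longleftrightarrow> (case x of (f, \<Phi>) \<Rightarrow> case y of (g, \<Psi>) \<Rightarrow>
     is_2mor (rdim Y) (rdim X) (fst f) (fst g) \<tau> \<and>
     (\<forall>A. vcomp (\<Psi> A) (hcomp (robj Y A) (robj Y A) f g (id2 (fst (robj Y A))) \<tau>)
          = vcomp (hcomp f g (robj X A) (robj X A) \<tau> (id2 (fst (robj X A)))) (\<Phi> A)))"

definition terminal_cat :: "'o set \<Rightarrow> ('o \<Rightarrow> 'o \<Rightarrow> 'h \<Rightarrow> bool) \<Rightarrow> bool" where
  "terminal_cat Obj Hom \<longleftrightarrow> (\<exists>!x. x \<in> Obj) \<and> (\<forall>x\<in>Obj. \<forall>y\<in>Obj. \<exists>!h. Hom x y h)"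

definition int_category_terminal :: "(nat vec \<Rightarrow> nat mat \<Rightarrow> nat vec \<Rightarrow> complex mat) \<Rightarrow> ('g,'m) two_group
     \<Rightarrow> ('g,'m) rep2 \<Rightarrow> ('g,'m) rep2 \<Rightarrow> bool" where
  "int_category_terminal PP G X Y =
     terminal_cat {(f, \<Phi>). one_int PP G X Y f \<Phi>} (two_int PP X Y)"

definition rho_invariant :: "('g \<Rightarrow> nat \<Rightarrow> nat) \<Rightarrow> ('g \<Rightarrow> nat \<Rightarrow> nat) \<Rightarrow> nat \<Rightarrow> nat \<Rightarrow> nat mat \<Rightarrow> bool" where
  "rho_invariant \<rho> \<rho>' n n' R \<longleftrightarrow>
     (\<forall>g. \<forall>i'<n'. \<forall>i<n. R $$ (\<rho>' g i', \<rho> g i) = R $$ (i', i))"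

definition Supp :: "nat mat \<Rightarrow> (nat \<times> nat) set" where
  "Supp R = {(i', i). i' < dim_row R \<and> i < dim_col R \<and> R $$ (i', i) \<noteq> 0}"

definition Mset :: "nat \<Rightarrow> nat \<Rightarrow> (nat \<times> nat) set" where
  "Mset n' n = {..<n'} \<times> {..<n}"

definition Iset :: "('g,'m) two_group \<Rightarrow> nat \<Rightarrow> nat \<Rightarrow> ('m \<Rightarrow> nat \<Rightarrow> complex) \<Rightarrow> ('m \<Rightarrow> nat \<Rightarrow> complex)
     \<Rightarrow> (nat \<times> nat) set" where
  "Iset G n n' \<beta> \<beta>' = {(i', i). i' < n' \<and> i < n \<and> (\<forall>u\<in>pi1 G. \<beta>' u i' = \<beta> u i)}"

definition orbit :: "('g \<Rightarrow> nat \<Rightarrow> nat) \<Rightarrow> ('g \<Rightarrow> nat \<Rightarrow> nat) \<Rightarrow> nat \<times> nat \<Rightarrow> (nat \<times> nat) set" where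
  "orbit \<rho> \<rho>' x = {(Hilbert_Choice.inv (\<rho>' g) (fst x), Hilbert_Choice.inv (\<rho> g) (snd x)) | g. True}"

definition union_of_intertwining_orbits :: "('g \<Rightarrow> nat \<Rightarrow> nat) \<Rightarrow> ('g \<Rightarrow> nat \<Rightarrow> nat)
     \<Rightarrow> nat \<Rightarrow> nat \<Rightarrow> (nat \<times> nat) set \<Rightarrow> (nat \<times> nat) set \<Rightarrow> bool" where
  "union_of_intertwining_orbits \<rho> \<rho>' n n' I S \<longleftrightarrow>
     (\<exists>Xs \<subseteq> Mset n' n. (\<forall>x\<in>Xs. orbit \<rho> \<rho>' x \<subseteq> I) \<and> S = \<Union> (orbit \<rho> \<rho>' ` Xs))"

end

theory Submission imports Defs begin

lemma dims_eq:
  fixes T T' :: "complex mat"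
  assumes T: "T \<in> carrier_mat b a" and T': "T' \<in> carrier_mat a b"
    and e1: "T' * T = 1\<^sub>m a" and e2: "T * T' = 1\<^sub>m b"
  shows "a = b"
proof -
  have "(\<Sum>i<a. (T' * T) $$ (i,i)) = (\<Sum>i<a. \<Sum>l<b. T' $$ (i,l) * T $$ (l,i))"
    using T T' by (auto simp: scalar_prod_def row_def col_def intro!: sum.cong sum.reindex_bij_witness[of _ id id])
  also have "\<dots> = (\<Sum>l<b. \<Sum>i<a. T $$ (l,i) * T' $$ (i,l))"
    by (subst sum.swap) (simp add: mult.commute)
  also have "\<dots> = (\<Sum>l<b. (T * T') $$ (l,l))"
    using T T' by (auto simp: scalar_prod_def row_def col_def intro!: sum.cong sum.reindex_bij_witness[of _ id id])
  finally have "(\<Sum>i<a. (1\<^sub>m a :: complex mat) $$ (i,i)) = (\<Sum>l<b. (1\<^sub>m b :: complex mat) $$ (l,l))"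
    using e1 e2 by simp
  then have "(of_nat a :: complex) = of_nat b" by simp
  then show ?thesis by simp
qed

lemma mat00_eq: "A \<in> carrier_mat 0 0 \<Longrightarrow> B \<in> carrier_mat 0 0 \<Longrightarrow> A = B"
  by (rule eq_matI) auto

lemma matinv_one: "matinv (1\<^sub>m d) = 1\<^sub>m d"
proof -
  have ex: "\<exists>B. B \<in> carrier_mat (dim_row (1\<^sub>m d :: complex mat)) (dim_row (1\<^sub>m d :: complex mat)) \<and> inverts_mat (1\<^sub>m d) B \<and> inverts_mat B (1\<^sub>m d)"
    by (rule exI[of _ "1\<^sub>m d"]) (auto simp: inverts_mat_def)
  have "matinv (1\<^sub>m d) \<in> carrier_mat d d \<and> inverts_mat (1\<^sub>m d) (matinv (1\<^sub>m d)) \<and> inverts_mat (matinv (1\<^sub>m d)) (1\<^sub>m d)"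
    unfolding matinv_def using someI_ex[OF ex] by simp
  then show ?thesis by (auto simp: inverts_mat_def)
qed

lemma block_diag_cons0: "A \<in> carrier_mat 0 0 \<Longrightarrow> block_diag (A # As) = block_diag As"
  by (rule eq_matI) (auto simp: Let_def four_block_mat_def)

lemma block_diag_all0: "\<forall>B\<in>set As. B \<in> carrier_mat 0 0 \<Longrightarrow> block_diag As = 0\<^sub>m 0 0"
  by (induction As) (auto simp: block_diag_cons0)

lemma block_diag_single: "\<forall>B\<in>set As. B \<in> carrier_mat 0 0 \<Longrightarrow> block_diag (A # As) = A"
  by (simp add: block_diag_all0 Let_def, rule eq_matI) (auto simp: four_block_mat_def Let_def)

lemma block_diag_mid: "\<forall>B\<in>set xs. B \<in> carrier_mat 0 0 \<Longrightarrow> \<forall>B\<in>set ys. B \<in> carrier_mat 0 0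
   \<Longrightarrow> block_diag (xs @ A # ys) = A"
  by (induction xs) (auto simp del: block_diag.simps simp: block_diag_cons0 block_diag_single)

lemma block_diag_map_one:
  assumes "k < m" "\<And>i. i < m \<Longrightarrow> i \<noteq> k \<Longrightarrow> F i \<in> carrier_mat 0 0"
  shows "block_diag (map F [0..<m]) = F k"
proof -
  have "[0..<m] = [0..<k] @ k # [Suc k..<m]" using assms(1)
    by (metis le_add1 le_add_same_cancel1 less_imp_add_positive upt_add_eq_append upt_conv_Cons)
  then show ?thesis using assms by (simp add: block_diag_mid)
qed

lemma dim_col_block_diag: "dim_col (block_diag As) = sum_list (map dim_col As)"
  by (induction As) (auto simp: Let_def four_block_mat_def)

lemma dim_row_block_diag: "dim_row (block_diag As) = sum_list (map dim_row As)"
  by (induction As) (auto simp: Let_def four_block_mat_def)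

lemma kron_00_left: "kron (0\<^sub>m 0 0) B \<in> carrier_mat 0 0"
  by (simp add: kron_def)

lemma kron_00_right: "kron A (0\<^sub>m 0 0) \<in> carrier_mat 0 0"
  by (simp add: kron_def)

lemma kron_scal_left: "kron (mat 1 1 (\<lambda>_. b)) (1\<^sub>m r) = (b::complex) \<cdot>\<^sub>m 1\<^sub>m r"
  by (rule eq_matI) (auto simp: kron_def)

lemma kron_scal_right: "kron (1\<^sub>m r) (mat 1 1 (\<lambda>_. b)) = (b::complex) \<cdot>\<^sub>m 1\<^sub>m r"
  by (rule eq_matI) (auto simp: kron_def)

lemma scal_eq:
  fixes P T' :: "complex mat"
  assumes P: "P \<in> carrier_mat r r" and T': "T' \<in> carrier_mat r r" and inv: "T' * P = 1\<^sub>m r"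
    and r: "0 < r" and eq: "P * (b' \<cdot>\<^sub>m 1\<^sub>m r) = (b \<cdot>\<^sub>m 1\<^sub>m r) * P"
  shows "b' = b"
proof -
  have "P * (b' \<cdot>\<^sub>m 1\<^sub>m r) = b' \<cdot>\<^sub>m P" using P by (simp add: mult_smult_distrib[of P r r "1\<^sub>m r" r])
  moreover have "(b \<cdot>\<^sub>m 1\<^sub>m r) * P = b \<cdot>\<^sub>m P" using P by (simp add: mult_smult_assoc_mat[of "1\<^sub>m r" r r P r])
  ultimately have "b' \<cdot>\<^sub>m P = b \<cdot>\<^sub>m P" using eq by simp
  then have "T' * (b' \<cdot>\<^sub>m P) = T' * (b \<cdot>\<^sub>m P)" by simp
  then have "b' \<cdot>\<^sub>m (T' * P) = b \<cdot>\<^sub>m (T' * P)"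
    using P T' by (simp add: mult_smult_distrib[of T' r r P r])
  then have "(b' \<cdot>\<^sub>m 1\<^sub>m r) $$ (0,0) = (b \<cdot>\<^sub>m 1\<^sub>m r) $$ (0,0)" using inv by simp
  then show ?thesis using r by simp
qed

lemma permmat_id: "permmat n id = 1\<^sub>m n"
  by (rule eq_matI) (auto simp: permmat_def)

lemma permmat_carrier[simp]: "permmat n \<sigma> \<in> carrier_mat n n"
  by (simp add: permmat_def)

lemma permmat_dims[simp]: "dim_row (permmat n \<sigma>) = n" "dim_col (permmat n \<sigma>) = n"
  by (simp_all add: permmat_def)

lemma permmat_left:
  fixes R :: "nat mat"
  assumes s: "\<sigma> permutes {..<m}" and R: "R \<in> carrier_mat m n" and i: "i < m" and j: "j < n"
  shows "(permmat m \<sigma> * R) $$ (\<sigma> i, j) = R $$ (i, j)"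
proof -
  have si: "\<sigma> i < m" using permutes_in_image[OF s] i by auto
  have "(permmat m \<sigma> * R) $$ (\<sigma> i, j) = (\<Sum>l<m. (if \<sigma> i = \<sigma> l then 1 else 0) * R $$ (l, j))"
    using R si j by (auto simp: scalar_prod_def permmat_def intro!: sum.reindex_bij_witness[of _ id id])
  also have "\<dots> = (\<Sum>l<m. if l = i then R $$ (l, j) else 0)"
    using permutes_inj[OF s] by (intro sum.cong) (auto dest: injD)
  also have "\<dots> = R $$ (i, j)" using i by simp
  finally show ?thesis .
qed

lemma permmat_right:
  fixes R :: "nat mat"
  assumes s: "\<tau> permutes {..<n}" and R: "R \<in> carrier_mat m n" and k: "k < m" and j: "j < n"
  shows "(R * permmat n \<tau>) $$ (k, j) = R $$ (k, \<tau> j)"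
proof -
  have tj: "\<tau> j < n" using permutes_in_image[OF s] j by auto
  have "(R * permmat n \<tau>) $$ (k, j) = (\<Sum>l<n. R $$ (k, l) * (if l = \<tau> j then 1 else 0))"
    using R k j by (auto simp: scalar_prod_def permmat_def intro!: sum.reindex_bij_witness[of _ id id])
  also have "\<dots> = (\<Sum>l<n. if l = \<tau> j then R $$ (k, l) else 0)"
    by (intro sum.cong) auto
  also have "\<dots> = R $$ (k, \<tau> j)" using tj by simp
  finally show ?thesis .
qed

lemma rho_one:
  assumes "special_2group G" "admissible G n \<rho> \<beta> c"
  shows "\<rho> (oone G) = id"
proof
  fix x
  have e: "omul G (oone G) (oone G) = oone G" using assms(1) unfolding special_2group_def by (elim conjE) blast
  have p: "\<rho> (oone G) permutes {..<n}" and h: "\<rho> (omul G (oone G) (oone G)) = \<rho> (oone G) \<circ> \<rho> (oone G)"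
    using assms(2) unfolding admissible_def by blast+
  have "\<rho> (oone G) (\<rho> (oone G) x) = \<rho> (oone G) x" using h e by (metis comp_apply)
  then show "\<rho> (oone G) x = id x" using permutes_inj[OF p] by (simp add: inj_eq)
qed

lemma gaminv_one:
  assumes "special_2group G" "u \<in> pi1 G"
  shows "gaminv G (oone G) u = u"
proof -
  have ax: "\<forall>x. \<forall>\<phi>\<in>aut G x. mtens G (mid G (oone G)) \<phi> = \<phi> \<and> mtens G \<phi> (mid G (oone G)) = \<phi>"
    using assms(1) unfolding special_2group_def by (elim conjE) assumption
  have g: "\<And>v. v \<in> pi1 G \<Longrightarrow> gam G (oone G) v = v"
    using ax unfolding gam_def pi1_def by blast
  have "inj_on (gam G (oone G)) (pi1 G)" using g by (simp add: inj_on_def)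
  then have "the_inv_into (pi1 G) (gam G (oone G)) (gam G (oone G) u) = u"
    using assms(2) by (rule the_inv_into_f_f)
  then show ?thesis using g[OF assms(2)] by (simp add: gaminv_def)
qed

lemma Frep_simps[simp]:
  "rdim (Frep G n \<rho> \<beta> c) = n"
  "robj (Frep G n \<rho> \<beta> c) g = (permmat n (\<rho> g), triv_gauge (permmat n (\<rho> g)))"
  "rmor (Frep G n \<rho> \<beta> c) g \<phi> = (\<lambda>i j. if i < n \<and> j < n \<and> i = \<rho> g j
                          then mat 1 1 (\<lambda>_. \<beta> (gaminv G g \<phi>) i) else 0\<^sub>m 0 0)"
  "rF2 (Frep G n \<rho> \<beta> c) g h = (\<lambda>i j. if i < n \<and> j < n \<and> i = \<rho> (omul G g h) j
                          then mat 1 1 (\<lambda>_. c g h i) else 0\<^sub>m 0 0)"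
  "rF0 (Frep G n \<rho> \<beta> c) = id2 (1\<^sub>m n)"
  by (simp_all add: Frep_def)

lemma inv2_entry:
  fixes T :: arr
  assumes "is_2mor m n R R' T" "inv2 m n R R' T" "i < m" "j < n"
    "R \<in> carrier_mat m n" "R' \<in> carrier_mat m n"
  shows "\<exists>T'. T i j \<in> carrier_mat (R' $$ (i,j)) (R $$ (i,j)) \<and> T' \<in> carrier_mat (R $$ (i,j)) (R' $$ (i,j))
       \<and> T' * T i j = 1\<^sub>m (R $$ (i,j)) \<and> T i j * T' = 1\<^sub>m (R' $$ (i,j))"
proof -
  obtain T' where T': "is_2mor m n R' R T'" "vcomp T' T = id2 R" "vcomp T T' = id2 R'"
    using assms(2) unfolding inv2_def by blast
  have "vcomp T' T i j = id2 R i j" "vcomp T T' i j = id2 R' i j" using T' by simp_all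
  then show ?thesis using assms T'(1) unfolding is_2mor_def vcomp_def id2_def
    by (intro exI[of _ "T' i j"]) auto
qed

lemma part1:
  assumes adm: "admissible G n \<rho> \<beta> c" and adm': "admissible G n' \<rho>' \<beta>' c'"
    and oi: "one_int PP G (Frep G n \<rho> \<beta> c) (Frep G n' \<rho>' \<beta>' c') f \<Phi>"
  shows "rho_invariant \<rho> \<rho>' n n' (fst f)"
  unfolding rho_invariant_def
proof (intro allI impI)
  fix g i' i assume i': "i' < n'" and i: "i < n"
  obtain R s where f: "f = (R, s)" by (cases f)
  have R: "R \<in> carrier_mat n' n" using oi f unfolding one_int_def is_1mor_def by simp
  have p: "\<rho> g permutes {..<n}" using adm unfolding admissible_def by blast
  have p': "\<rho>' g permutes {..<n'}" using adm' unfolding admissible_def by blast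
  let ?P = "permmat n (\<rho> g) :: nat mat" and ?P' = "permmat n' (\<rho>' g) :: nat mat"
  have m: "is_2mor n' n (?P' * R) (R * ?P) (\<Phi> g)" "inv2 n' n (?P' * R) (R * ?P) (\<Phi> g)"
    using oi f unfolding one_int_def by simp_all
  have k: "\<rho>' g i' < n'" using permutes_in_image[OF p'] i' by auto
  have c1: "?P' * R \<in> carrier_mat n' n" "R * ?P \<in> carrier_mat n' n" using R by auto
  obtain T' where "\<Phi> g (\<rho>' g i') i \<in> carrier_mat ((R * ?P) $$ (\<rho>' g i', i)) ((?P' * R) $$ (\<rho>' g i', i))"
    "T' \<in> carrier_mat ((?P' * R) $$ (\<rho>' g i', i)) ((R * ?P) $$ (\<rho>' g i', i))"
    "T' * \<Phi> g (\<rho>' g i') i = 1\<^sub>m ((?P' * R) $$ (\<rho>' g i', i))"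
    "\<Phi> g (\<rho>' g i') i * T' = 1\<^sub>m ((R * ?P) $$ (\<rho>' g i', i))"
    using inv2_entry[OF m k i c1] by blast
  then have "(?P' * R) $$ (\<rho>' g i', i) = (R * ?P) $$ (\<rho>' g i', i)" by (rule dims_eq)
  then show "fst f $$ (\<rho>' g i', \<rho> g i) = fst f $$ (i', i)"
    using permmat_left[OF p' R i' i] permmat_right[OF p R k i] f by simp
qed

lemma triv_gauge_one_col:
  assumes R: "R \<in> carrier_mat n' n" and k: "k < n'" and j: "j < n"
  shows "triv_gauge (1\<^sub>m n') k (col R j) = 1\<^sub>m (R $$ (k, j))"
  using R k j by (simp add: triv_gauge_def)

lemma kron_dims[simp]: "dim_row (kron A B) = dim_row A * dim_row B" "dim_col (kron A B) = dim_col A * dim_col B"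
  by (simp_all add: kron_def)

lemma hcompY:
  fixes R :: "nat mat"
  assumes R: "R \<in> carrier_mat n' n" and k: "k < n'" and j: "j < n" and r1: "\<rho>' (oone G) = id"
    and g: "gaminv G (oone G) u = u"
  shows "hcomp (robj (Frep G n' \<rho>' \<beta>' c') (oone G)) (robj (Frep G n' \<rho>' \<beta>' c') (oone G)) (R,s) (R,s)
     (rmor (Frep G n' \<rho>' \<beta>' c') (oone G) u) (id2 R) k j = \<beta>' u k \<cdot>\<^sub>m 1\<^sub>m (R $$ (k, j))"
proof -
  have bd: "block_diag (map (\<lambda>i. kron (if k < n' \<and> i < n' \<and> k = i then mat 1 1 (\<lambda>_. \<beta>' u k) else 0\<^sub>m 0 0) (id2 R i j)) [0..<n'])
     = kron (mat 1 1 (\<lambda>_. \<beta>' u k)) (id2 R k j)"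
    using k by (subst block_diag_map_one[OF k]) (auto simp: kron_00_left)
  have "hcomp (robj (Frep G n' \<rho>' \<beta>' c') (oone G)) (robj (Frep G n' \<rho>' \<beta>' c') (oone G)) (R,s) (R,s)
     (rmor (Frep G n' \<rho>' \<beta>' c') (oone G) u) (id2 R) k j = 1\<^sub>m (R $$ (k, j)) * block_diag (map (\<lambda>i. kron (if k < n' \<and> i < n' \<and> k = i then mat 1 1 (\<lambda>_. \<beta>' u k) else 0\<^sub>m 0 0) (id2 R i j)) [0..<n']) * matinv (1\<^sub>m (R $$ (k, j)))"
    using R k j unfolding hcomp_def Frep_simps fst_conv snd_conv r1 permmat_id g
    by (simp add: triv_gauge_one_col)
  also have "\<dots> = \<beta>' u k \<cdot>\<^sub>m 1\<^sub>m (R $$ (k, j))"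
    unfolding bd matinv_one using k j R by (simp add: id2_def kron_scal_left[unfolded One_nat_def])
  finally show ?thesis .
qed

lemma hcompX:
  fixes R :: "nat mat"
  assumes f: "is_1mor n n' (R,s)" and k: "k < n'" and j: "j < n" and r1: "\<rho> (oone G) = id"
    and g: "gaminv G (oone G) u = u"
  shows "hcomp (R,s) (R,s) (robj (Frep G n \<rho> \<beta> c) (oone G)) (robj (Frep G n \<rho> \<beta> c) (oone G))
     (id2 R) (rmor (Frep G n \<rho> \<beta> c) (oone G) u) k j = \<beta> u j \<cdot>\<^sub>m 1\<^sub>m (R $$ (k, j))"
proof -
  have R: "R \<in> carrier_mat n' n" and sg: "s k (unit_vec n j) = 1\<^sub>m (R $$ (k, j))"
    using f k j unfolding is_1mor_def by auto
  have bd: "block_diag (map (\<lambda>i. kron (id2 R k i) (if i < n \<and> j < n \<and> i = j then mat 1 1 (\<lambda>_. \<beta> u i) else 0\<^sub>m 0 0)) [0..<n])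
     = kron (id2 R k j) (mat 1 1 (\<lambda>_. \<beta> u j))"
    using j by (subst block_diag_map_one[OF j]) (auto simp: kron_00_right)
  have cu: "col (1\<^sub>m n) j = unit_vec n j" using j by (intro eq_vecI) auto
  have "hcomp (R,s) (R,s) (robj (Frep G n \<rho> \<beta> c) (oone G)) (robj (Frep G n \<rho> \<beta> c) (oone G))
     (id2 R) (rmor (Frep G n \<rho> \<beta> c) (oone G) u) k j = 1\<^sub>m (R $$ (k, j)) * block_diag (map (\<lambda>i. kron (id2 R k i) (if i < n \<and> j < n \<and> i = j then mat 1 1 (\<lambda>_. \<beta> u i) else 0\<^sub>m 0 0)) [0..<n]) * matinv (1\<^sub>m (R $$ (k, j)))"
    using R k j unfolding hcomp_def Frep_simps fst_conv snd_conv r1 permmat_id g id_apply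
    by (simp add: cu sg)
  also have "\<dots> = \<beta> u j \<cdot>\<^sub>m 1\<^sub>m (R $$ (k, j))"
    unfolding bd matinv_one using k j R by (simp add: id2_def kron_scal_right[unfolded One_nat_def])
  finally show ?thesis .
qed

lemma part2:
  assumes sp: "special_2group G" and adm: "admissible G n \<rho> \<beta> c" and adm': "admissible G n' \<rho>' \<beta>' c'"
    and oi: "one_int PP G (Frep G n \<rho> \<beta> c) (Frep G n' \<rho>' \<beta>' c') f \<Phi>"
  shows "Supp (fst f) \<subseteq> Iset G n n' \<beta> \<beta>'"
proof
  fix x assume x: "x \<in> Supp (fst f)"
  obtain R s where f: "f = (R, s)" by (cases f)
  have f1: "is_1mor n n' (R,s)" using oi f unfolding one_int_def by simp
  then have R: "R \<in> carrier_mat n' n" unfolding is_1mor_def by simp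
  obtain k j where x2: "x = (k, j)" by (cases x)
  have k: "k < n'" and j: "j < n" and nz: "R $$ (k, j) \<noteq> 0" using x x2 f R unfolding Supp_def by auto
  have r1: "\<rho> (oone G) = id" using rho_one[OF sp adm] .
  have r1': "\<rho>' (oone G) = id" using rho_one[OF sp adm'] .
  have "\<beta>' u k = \<beta> u j" if u: "u \<in> pi1 G" for u
  proof -
    have g: "gaminv G (oone G) u = u" using gaminv_one[OF sp u] .
    have ua: "u \<in> aut G (oone G)" using u unfolding pi1_def .
    have nat: "vcomp (\<Phi> (oone G)) (hcomp (robj (Frep G n' \<rho>' \<beta>' c') (oone G)) (robj (Frep G n' \<rho>' \<beta>' c') (oone G)) (R,s) (R,s)
           (rmor (Frep G n' \<rho>' \<beta>' c') (oone G) u) (id2 R))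
        = vcomp (hcomp (R,s) (R,s) (robj (Frep G n \<rho> \<beta> c) (oone G)) (robj (Frep G n \<rho> \<beta> c) (oone G))
           (id2 R) (rmor (Frep G n \<rho> \<beta> c) (oone G) u)) (\<Phi> (oone G))"
      using oi f ua unfolding one_int_def by (simp only: fst_conv)
    then have "vcomp (\<Phi> (oone G)) (hcomp (robj (Frep G n' \<rho>' \<beta>' c') (oone G)) (robj (Frep G n' \<rho>' \<beta>' c') (oone G)) (R,s) (R,s)
           (rmor (Frep G n' \<rho>' \<beta>' c') (oone G) u) (id2 R)) k j
        = vcomp (hcomp (R,s) (R,s) (robj (Frep G n \<rho> \<beta> c) (oone G)) (robj (Frep G n \<rho> \<beta> c) (oone G))
           (id2 R) (rmor (Frep G n \<rho> \<beta> c) (oone G) u)) (\<Phi> (oone G)) k j" by simp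
    then have eq: "\<Phi> (oone G) k j * (\<beta>' u k \<cdot>\<^sub>m 1\<^sub>m (R $$ (k, j))) = (\<beta> u j \<cdot>\<^sub>m 1\<^sub>m (R $$ (k, j))) * \<Phi> (oone G) k j"
      unfolding vcomp_def hcompY[where G=G and \<rho>'=\<rho>', OF R k j r1' g] hcompX[where G=G and \<rho>=\<rho>, OF f1 k j r1 g] .
    have m0: "is_2mor n' n (permmat n' (\<rho>' (oone G)) * R) (R * permmat n (\<rho> (oone G))) (\<Phi> (oone G))"
       "inv2 n' n (permmat n' (\<rho>' (oone G)) * R) (R * permmat n (\<rho> (oone G))) (\<Phi> (oone G))"
      using oi f unfolding one_int_def by simp_all
    have m: "is_2mor n' n R R (\<Phi> (oone G))" "inv2 n' n R R (\<Phi> (oone G))"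
      using m0 R by (simp_all add: r1 r1' permmat_id)
    obtain T' where "\<Phi> (oone G) k j \<in> carrier_mat (R $$ (k,j)) (R $$ (k,j))"
      "T' \<in> carrier_mat (R $$ (k,j)) (R $$ (k,j))" "T' * \<Phi> (oone G) k j = 1\<^sub>m (R $$ (k,j))"
      using inv2_entry[OF m k j R R] by blast
    from scal_eq[OF this _ eq] nz show ?thesis by simp
  qed
  then show "x \<in> Iset G n n' \<beta> \<beta>'" using x2 k j unfolding Iset_def by auto
qed





lemma c00: "A \<in> carrier_mat 0 0 \<Longrightarrow> A = 0\<^sub>m 0 0"
  by (rule mat00_eq) auto

lemma hcomp_dim_row: "dim_row (hcomp ft ft' f f' Tt T k j) =
  (if k < dim_row (fst ft) \<and> j < dim_col (fst f) then dim_row (snd ft' k (col (fst f') j)) else 0)"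
  unfolding hcomp_def by (cases "k < dim_row (fst ft) \<and> j < dim_col (fst f)") (simp_all only: if_True if_False simp_thms index_mult_mat(2) index_zero_mat(2))

lemma hcomp_dim_col: "dim_col (hcomp ft ft' f f' Tt T k j) =
  (if k < dim_row (fst ft) \<and> j < dim_col (fst f) then dim_col (matinv (snd ft k (col (fst f) j))) else 0)"
  unfolding hcomp_def by (cases "k < dim_row (fst ft) \<and> j < dim_col (fst f)") (simp_all only: if_True if_False simp_thms index_mult_mat(3) index_zero_mat(3))

lemma hcomp_col0:
  assumes "\<And>k j. k < dim_row (fst ft) \<Longrightarrow> j < dim_col (fst f) \<Longrightarrow> snd ft k (col (fst f) j) \<in> carrier_mat 0 0"
  shows "dim_col (hcomp ft ft' f f' Tt T k j) = 0"
proof (cases "k < dim_row (fst ft) \<and> j < dim_col (fst f)")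
  case True
  then have "snd ft k (col (fst f) j) = 1\<^sub>m 0" using assms by (intro mat00_eq) auto
  then show ?thesis using True by (simp only: hcomp_dim_col matinv_one if_True index_one_mat(3) simp_thms)
qed (simp only: hcomp_dim_col if_False)

lemma hcomp_row0:
  assumes "\<And>k j. k < dim_row (fst ft) \<Longrightarrow> j < dim_col (fst f) \<Longrightarrow> snd ft' k (col (fst f') j) \<in> carrier_mat 0 0"
  shows "dim_row (hcomp ft ft' f f' Tt T k j) = 0"
proof (cases "k < dim_row (fst ft) \<and> j < dim_col (fst f)")
  case True
  then show ?thesis using assms[OF conjunct1[OF True] conjunct2[OF True]]
    by (simp only: hcomp_dim_row if_True carrier_mat_def mem_Collect_eq simp_thms)
qed (simp only: hcomp_dim_row if_False)

lemma triv_gauge_zero: "dim_col P = m \<Longrightarrow> triv_gauge P k (0\<^sub>v m) = 1\<^sub>m 0"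
  by (auto simp: triv_gauge_def)


lemma gauge_comp_zero:
  assumes "Rt \<in> carrier_mat m m" "R \<in> carrier_mat m m"
  shows "gauge_comp PP Rt (triv_gauge Rt) R st k (0\<^sub>v m) \<in> carrier_mat 0 0"
proof (cases "k < dim_row Rt")
  case True
  let ?B1 = "block_diag (map (\<lambda>i. kron (1\<^sub>m (Rt $$ (k,i))) (st i (0\<^sub>v m))) [0..<dim_col Rt])"
  let ?B2 = "block_diag (map (\<lambda>j. kron (matinv (triv_gauge Rt k (col R j))) (1\<^sub>m (0\<^sub>v m $ j))) [0..<dim_col R])"
  have g: "gauge_comp PP Rt (triv_gauge Rt) R st k (0\<^sub>v m) = triv_gauge Rt k (R *\<^sub>v 0\<^sub>v m) * ?B1 * PP (row Rt k) R (0\<^sub>v m) * ?B2"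
    unfolding gauge_comp_def by (rule if_P) (use True assms in auto)
  have r: "R *\<^sub>v 0\<^sub>v m = 0\<^sub>v m" using assms by (intro eq_vecI) auto
  have t: "triv_gauge Rt k (R *\<^sub>v 0\<^sub>v m) = 1\<^sub>m 0" unfolding r using assms by (intro triv_gauge_zero) auto
  have c: "dim_col ?B2 = 0"
    using assms unfolding dim_col_block_diag by (simp add: sum_list_eq_0_iff)
  show ?thesis unfolding g carrier_mat_def using c t by (simp only: index_mult_mat(2,3) index_one_mat(2)) simp
next
  case False
  then show ?thesis unfolding gauge_comp_def by (simp only: if_False simp_thms) simp
qed



abbreviation f0 :: "nat \<Rightarrow> nat \<Rightarrow> mor1" where
  "f0 n' n \<equiv> (0\<^sub>m n' n, \<lambda>_ _. 1\<^sub>m 0)"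

abbreviation Phi0 :: "'g \<Rightarrow> arr" where
  "Phi0 \<equiv> \<lambda>_ _ _. 0\<^sub>m 0 0"

lemma inv_one0: "invertible_mat (1\<^sub>m 0 :: complex mat)"
  unfolding invertible_mat_def inverts_mat_def square_mat.simps by (intro conjI exI[of _ "1\<^sub>m 0"]) simp_all

lemma is1: "is_1mor n n' (f0 n' n)"
  unfolding is_1mor_def by (simp add: inv_one0)

lemma is2: "is_2mor n' n A B (\<lambda>_ _. 0\<^sub>m 0 0) \<longleftrightarrow> (\<forall>i<n'. \<forall>j<n. A $$ (i,j) = 0 \<and> B $$ (i,j) = 0)"
  unfolding is_2mor_def carrier_mat_def by auto

lemma inv2z: "inv2 n' n (0\<^sub>m n' n) (0\<^sub>m n' n) (\<lambda>_ _. 0\<^sub>m 0 0)"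
  unfolding inv2_def
proof (intro exI[of _ "\<lambda>_ _. 0\<^sub>m 0 0"] conjI)
  show "is_2mor n' n (0\<^sub>m n' n) (0\<^sub>m n' n) (\<lambda>_ _. 0\<^sub>m 0 0)" by (simp add: is2)
  have "vcomp (\<lambda>_ _. 0\<^sub>m 0 0) (\<lambda>_ _. 0\<^sub>m 0 0) = id2 (0\<^sub>m n' n :: nat mat)"
    unfolding vcomp_def id2_def fun_eq_iff by (intro allI mat00_eq) auto
  then show "vcomp (\<lambda>_ _. 0\<^sub>m 0 0) (\<lambda>_ _. 0\<^sub>m 0 0) = id2 (0\<^sub>m n' n :: nat mat)"
    "vcomp (\<lambda>_ _. 0\<^sub>m 0 0) (\<lambda>_ _. 0\<^sub>m 0 0) = id2 (0\<^sub>m n' n :: nat mat)" by simp_all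
qed


lemma exist_nat:
  "vcomp (Phi0 A) (hcomp (robj (Frep G n' \<rho>' \<beta>' c') A) (robj (Frep G n' \<rho>' \<beta>' c') A) (f0 n' n) (f0 n' n)
          (rmor (Frep G n' \<rho>' \<beta>' c') A \<phi>) (id2 (fst (f0 n' n)))) =
        vcomp (hcomp (f0 n' n) (f0 n' n) (robj (Frep G n \<rho> \<beta> c) A) (robj (Frep G n \<rho> \<beta> c) A)
          (id2 (fst (f0 n' n))) (rmor (Frep G n \<rho> \<beta> c) A \<phi>)) (Phi0 A)"
  unfolding vcomp_def fun_eq_iff
proof (intro allI mat00_eq)
  fix k j
  have 1: "dim_col (hcomp (robj (Frep G n' \<rho>' \<beta>' c') A) X (f0 n' n) Y T1 T2 k j) = 0" for X Y T1 T2
    by (rule hcomp_col0) (simp add: triv_gauge_zero)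
  have 2: "dim_row (hcomp (f0 n' n) (f0 n' n) X Y T1 T2 k j) = 0" for X Y T1 T2
    by (rule hcomp_row0) simp
  show "Phi0 A k j * hcomp (robj (Frep G n' \<rho>' \<beta>' c') A) (robj (Frep G n' \<rho>' \<beta>' c') A) (f0 n' n) (f0 n' n)
          (rmor (Frep G n' \<rho>' \<beta>' c') A \<phi>) (id2 (fst (f0 n' n))) k j \<in> carrier_mat 0 0"
    using 1 by (simp only: carrier_mat_def mem_Collect_eq index_mult_mat(2,3) index_zero_mat(2,3) simp_thms)
  show "hcomp (f0 n' n) (f0 n' n) (robj (Frep G n \<rho> \<beta> c) A) (robj (Frep G n \<rho> \<beta> c) A)
          (id2 (fst (f0 n' n))) (rmor (Frep G n \<rho> \<beta> c) A \<phi>) k j * Phi0 A k j \<in> carrier_mat 0 0"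
    using 2 by (simp only: carrier_mat_def mem_Collect_eq index_mult_mat(2,3) index_zero_mat(2,3) simp_thms)
qed


lemma exist_F2:
  "vcomp (Phi0 (omul G A B))
          (hcomp (comp1 PP (robj (Frep G n' \<rho>' \<beta>' c') A) (robj (Frep G n' \<rho>' \<beta>' c') B)) (robj (Frep G n' \<rho>' \<beta>' c') (omul G A B)) (f0 n' n) (f0 n' n) (rF2 (Frep G n' \<rho>' \<beta>' c') A B) (id2 (fst (f0 n' n))))
        = vcomp (hcomp (f0 n' n) (f0 n' n) (comp1 PP (robj (Frep G n \<rho> \<beta> c) A) (robj (Frep G n \<rho> \<beta> c) B)) (robj (Frep G n \<rho> \<beta> c) (omul G A B)) (id2 (fst (f0 n' n))) (rF2 (Frep G n \<rho> \<beta> c) A B))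
           (vcomp (hcomp (comp1 PP (robj (Frep G n' \<rho>' \<beta>' c') A) (f0 n' n)) (comp1 PP (f0 n' n) (robj (Frep G n \<rho> \<beta> c) A)) (robj (Frep G n \<rho> \<beta> c) B) (robj (Frep G n \<rho> \<beta> c) B)
                     (Phi0 A) (id2 (fst (robj (Frep G n \<rho> \<beta> c) B))))
                  (hcomp (robj (Frep G n' \<rho>' \<beta>' c') A) (robj (Frep G n' \<rho>' \<beta>' c') A) (comp1 PP (robj (Frep G n' \<rho>' \<beta>' c') B) (f0 n' n)) (comp1 PP (f0 n' n) (robj (Frep G n \<rho> \<beta> c) B))
                     (id2 (fst (robj (Frep G n' \<rho>' \<beta>' c') A))) (Phi0 B)))"
  unfolding vcomp_def fun_eq_iff
proof (intro allI mat00_eq)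
  fix k j
  have 1: "dim_col (hcomp (comp1 PP (robj (Frep G n' \<rho>' \<beta>' c') A) (robj (Frep G n' \<rho>' \<beta>' c') B)) X (f0 n' n) Y T1 T2 k j) = 0" for X Y T1 T2
  proof (rule hcomp_col0)
    fix k j assume "j < dim_col (fst (f0 n' n))"
    then have cz: "col (0\<^sub>m n' n) j = 0\<^sub>v n'" by simp
    show "snd (comp1 PP (robj (Frep G n' \<rho>' \<beta>' c') A) (robj (Frep G n' \<rho>' \<beta>' c') B)) k (col (fst (f0 n' n)) j) \<in> carrier_mat 0 0"
      unfolding comp1_def snd_conv Frep_simps fst_conv cz by (rule gauge_comp_zero) auto
  qed
  have 2: "dim_row (hcomp (f0 n' n) (f0 n' n) X Y T1 T2 k j) = 0" for X Y T1 T2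
    by (rule hcomp_row0) simp
  have 3: "dim_col (hcomp (robj (Frep G n' \<rho>' \<beta>' c') A) Z (comp1 PP (robj (Frep G n' \<rho>' \<beta>' c') B) (f0 n' n)) X T1 T2 k j) = 0" for X Z T1 T2
  proof (rule hcomp_col0)
    have z: "fst (comp1 PP (robj (Frep G n' \<rho>' \<beta>' c') B) (f0 n' n)) = 0\<^sub>m n' n"
      unfolding comp1_def fst_conv Frep_simps by simp
    fix k j assume "j < dim_col (fst (comp1 PP (robj (Frep G n' \<rho>' \<beta>' c') B) (f0 n' n)))"
    then have cz: "col (fst (comp1 PP (robj (Frep G n' \<rho>' \<beta>' c') B) (f0 n' n))) j = 0\<^sub>v n'" unfolding z by simp
    show "snd (robj (Frep G n' \<rho>' \<beta>' c') A) k (col (fst (comp1 PP (robj (Frep G n' \<rho>' \<beta>' c') B) (f0 n' n))) j) \<in> carrier_mat 0 0"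
      unfolding cz unfolding Frep_simps snd_conv by (simp add: triv_gauge_zero)
  qed
  show "Phi0 (omul G A B) k j *
          hcomp (comp1 PP (robj (Frep G n' \<rho>' \<beta>' c') A) (robj (Frep G n' \<rho>' \<beta>' c') B)) (robj (Frep G n' \<rho>' \<beta>' c') (omul G A B)) (f0 n' n) (f0 n' n) (rF2 (Frep G n' \<rho>' \<beta>' c') A B) (id2 (fst (f0 n' n))) k j \<in> carrier_mat 0 0"
    using 1 by (simp only: carrier_mat_def mem_Collect_eq index_mult_mat(2,3) index_zero_mat(2,3) simp_thms)
  show "hcomp (f0 n' n) (f0 n' n) (comp1 PP (robj (Frep G n \<rho> \<beta> c) A) (robj (Frep G n \<rho> \<beta> c) B)) (robj (Frep G n \<rho> \<beta> c) (omul G A B)) (id2 (fst (f0 n' n))) (rF2 (Frep G n \<rho> \<beta> c) A B) k j *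
          (hcomp (comp1 PP (robj (Frep G n' \<rho>' \<beta>' c') A) (f0 n' n)) (comp1 PP (f0 n' n) (robj (Frep G n \<rho> \<beta> c) A)) (robj (Frep G n \<rho> \<beta> c) B) (robj (Frep G n \<rho> \<beta> c) B) (Phi0 A) (id2 (fst (robj (Frep G n \<rho> \<beta> c) B))) k j *
           hcomp (robj (Frep G n' \<rho>' \<beta>' c') A) (robj (Frep G n' \<rho>' \<beta>' c') A) (comp1 PP (robj (Frep G n' \<rho>' \<beta>' c') B) (f0 n' n)) (comp1 PP (f0 n' n) (robj (Frep G n \<rho> \<beta> c) B)) (id2 (fst (robj (Frep G n' \<rho>' \<beta>' c') A))) (Phi0 B) k j) \<in> carrier_mat 0 0"
    using 2 3 by (simp only: carrier_mat_def mem_Collect_eq index_mult_mat(2,3) index_zero_mat(2,3) simp_thms)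
qed

lemma exist_F0:
  "hcomp (robj (Frep G n' \<rho>' \<beta>' c') (oone G)) (id1 (rdim (Frep G n' \<rho>' \<beta>' c'))) (f0 n' n) (f0 n' n) (rF0 (Frep G n' \<rho>' \<beta>' c')) (id2 (fst (f0 n' n)))
    = vcomp (hcomp (f0 n' n) (f0 n' n) (robj (Frep G n \<rho> \<beta> c) (oone G)) (id1 (rdim (Frep G n \<rho> \<beta> c))) (id2 (fst (f0 n' n))) (rF0 (Frep G n \<rho> \<beta> c))) (Phi0 (oone G))"
  unfolding vcomp_def fun_eq_iff
proof (intro allI mat00_eq)
  fix k j
  have 1: "dim_col (hcomp (robj (Frep G n' \<rho>' \<beta>' c') (oone G)) X (f0 n' n) Y T1 T2 k j) = 0" for X Y T1 T2
    by (rule hcomp_col0) (simp add: triv_gauge_zero)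
  have h1b: "dim_row (hcomp X (id1 n') (f0 n' n) (f0 n' n) T1 T2 k j) = 0" for X T1 T2
    by (rule hcomp_row0) (simp add: triv_gauge_zero id1_def)
  have 2: "dim_row (hcomp (f0 n' n) (f0 n' n) X Y T1 T2 k j) = 0" for X Y T1 T2
    by (rule hcomp_row0) simp
  show "hcomp (robj (Frep G n' \<rho>' \<beta>' c') (oone G)) (id1 (rdim (Frep G n' \<rho>' \<beta>' c'))) (f0 n' n) (f0 n' n) (rF0 (Frep G n' \<rho>' \<beta>' c')) (id2 (fst (f0 n' n))) k j \<in> carrier_mat 0 0"
    using 1[of "id1 n'"] h1b[of "robj (Frep G n' \<rho>' \<beta>' c') (oone G)"] unfolding Frep_simps(1) by (simp only: carrier_mat_def mem_Collect_eq index_mult_mat(2,3) index_zero_mat(2,3) simp_thms)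
  show "hcomp (f0 n' n) (f0 n' n) (robj (Frep G n \<rho> \<beta> c) (oone G)) (id1 (rdim (Frep G n \<rho> \<beta> c))) (id2 (fst (f0 n' n))) (rF0 (Frep G n \<rho> \<beta> c)) k j * Phi0 (oone G) k j \<in> carrier_mat 0 0"
    using 2 by (simp only: carrier_mat_def mem_Collect_eq index_mult_mat(2,3) index_zero_mat(2,3) simp_thms)
qed


lemma exist_obj:
  "one_int PP G (Frep G n \<rho> \<beta> c) (Frep G n' \<rho>' \<beta>' c') (f0 n' n) Phi0"
proof -
  have z1: "permmat n' \<sigma> * (0\<^sub>m n' n :: nat mat) = 0\<^sub>m n' n" for \<sigma>
    by (rule right_mult_zero_mat) simp
  have z2: "(0\<^sub>m n' n :: nat mat) * permmat n \<tau> = 0\<^sub>m n' n" for \<tau>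
    by (rule left_mult_zero_mat) simp
  show ?thesis
    unfolding one_int_def
  proof (intro conjI allI ballI)
    show "is_1mor (rdim (Frep G n \<rho> \<beta> c)) (rdim (Frep G n' \<rho>' \<beta>' c')) (f0 n' n)"
      unfolding Frep_simps(1) by (rule is1)
    fix A
    show "is_2mor (rdim (Frep G n' \<rho>' \<beta>' c')) (rdim (Frep G n \<rho> \<beta> c))
        (fst (robj (Frep G n' \<rho>' \<beta>' c') A) * fst (f0 n' n)) (fst (f0 n' n) * fst (robj (Frep G n \<rho> \<beta> c) A)) (Phi0 A)"
      unfolding Frep_simps fst_conv z1 z2 by (simp add: is2)
    show "inv2 (rdim (Frep G n' \<rho>' \<beta>' c')) (rdim (Frep G n \<rho> \<beta> c))
        (fst (robj (Frep G n' \<rho>' \<beta>' c') A) * fst (f0 n' n)) (fst (f0 n' n) * fst (robj (Frep G n \<rho> \<beta> c) A)) (Phi0 A)"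
      unfolding Frep_simps fst_conv z1 z2 by (rule inv2z)
  next
    fix A \<phi> show "vcomp (Phi0 A) (hcomp (robj (Frep G n' \<rho>' \<beta>' c') A) (robj (Frep G n' \<rho>' \<beta>' c') A) (f0 n' n) (f0 n' n)
          (rmor (Frep G n' \<rho>' \<beta>' c') A \<phi>) (id2 (fst (f0 n' n)))) =
        vcomp (hcomp (f0 n' n) (f0 n' n) (robj (Frep G n \<rho> \<beta> c) A) (robj (Frep G n \<rho> \<beta> c) A)
          (id2 (fst (f0 n' n))) (rmor (Frep G n \<rho> \<beta> c) A \<phi>)) (Phi0 A)"
      by (rule exist_nat)
  next
    fix A B show "vcomp (Phi0 (omul G A B))
          (hcomp (comp1 PP (robj (Frep G n' \<rho>' \<beta>' c') A) (robj (Frep G n' \<rho>' \<beta>' c') B)) (robj (Frep G n' \<rho>' \<beta>' c') (omul G A B)) (f0 n' n) (f0 n' n) (rF2 (Frep G n' \<rho>' \<beta>' c') A B) (id2 (fst (f0 n' n))))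
        = vcomp (hcomp (f0 n' n) (f0 n' n) (comp1 PP (robj (Frep G n \<rho> \<beta> c) A) (robj (Frep G n \<rho> \<beta> c) B)) (robj (Frep G n \<rho> \<beta> c) (omul G A B)) (id2 (fst (f0 n' n))) (rF2 (Frep G n \<rho> \<beta> c) A B))
           (vcomp (hcomp (comp1 PP (robj (Frep G n' \<rho>' \<beta>' c') A) (f0 n' n)) (comp1 PP (f0 n' n) (robj (Frep G n \<rho> \<beta> c) A)) (robj (Frep G n \<rho> \<beta> c) B) (robj (Frep G n \<rho> \<beta> c) B)
                     (Phi0 A) (id2 (fst (robj (Frep G n \<rho> \<beta> c) B))))
                  (hcomp (robj (Frep G n' \<rho>' \<beta>' c') A) (robj (Frep G n' \<rho>' \<beta>' c') A) (comp1 PP (robj (Frep G n' \<rho>' \<beta>' c') B) (f0 n' n)) (comp1 PP (f0 n' n) (robj (Frep G n \<rho> \<beta> c) B))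
                     (id2 (fst (robj (Frep G n' \<rho>' \<beta>' c') A))) (Phi0 B)))"
      by (rule exist_F2)
  next
    show "hcomp (robj (Frep G n' \<rho>' \<beta>' c') (oone G)) (id1 (rdim (Frep G n' \<rho>' \<beta>' c'))) (f0 n' n) (f0 n' n) (rF0 (Frep G n' \<rho>' \<beta>' c')) (id2 (fst (f0 n' n)))
    = vcomp (hcomp (f0 n' n) (f0 n' n) (robj (Frep G n \<rho> \<beta> c) (oone G)) (id1 (rdim (Frep G n \<rho> \<beta> c))) (id2 (fst (f0 n' n))) (rF0 (Frep G n \<rho> \<beta> c))) (Phi0 (oone G))"
      by (rule exist_F0)
  qed
qed

lemma part3:
  assumes sp: "special_2group G" and adm: "admissible G n \<rho> \<beta> c" and adm': "admissible G n' \<rho>' \<beta>' c'"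
    and R: "R \<in> carrier_mat n' n" and inv: "rho_invariant \<rho> \<rho>' n n' R" and sub: "Supp R \<subseteq> I"
  shows "union_of_intertwining_orbits \<rho> \<rho>' n n' I (Supp R)"
proof -
  have orb: "orbit \<rho> \<rho>' x \<subseteq> Supp R" if x: "x \<in> Supp R" for x
  proof
    fix y assume "y \<in> orbit \<rho> \<rho>' x"
    then obtain g where y: "y = (Hilbert_Choice.inv (\<rho>' g) (fst x), Hilbert_Choice.inv (\<rho> g) (snd x))"
      unfolding orbit_def by blast
    have p: "\<rho> g permutes {..<n}" using adm unfolding admissible_def by blast
    have p': "\<rho>' g permutes {..<n'}" using adm' unfolding admissible_def by blast
    obtain i' i where x2: "x = (i', i)" by (cases x)
    have i': "i' < n'" and i: "i < n" and nz: "R $$ (i', i) \<noteq> 0" using x x2 R unfolding Supp_def by auto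
    let ?a = "Hilbert_Choice.inv (\<rho>' g) i'" and ?b = "Hilbert_Choice.inv (\<rho> g) i"
    have a: "?a < n'" using permutes_in_image[OF permutes_inv[OF p']] i' by auto
    have b: "?b < n" using permutes_in_image[OF permutes_inv[OF p]] i by auto
    have "R $$ (\<rho>' g ?a, \<rho> g ?b) = R $$ (?a, ?b)" using inv a b unfolding rho_invariant_def by blast
    then have "R $$ (?a, ?b) = R $$ (i', i)" using permutes_inverses(1)[OF p'] permutes_inverses(1)[OF p] by simp
    then show "y \<in> Supp R" using y x2 a b nz R unfolding Supp_def by auto
  qed
  have self: "x \<in> orbit \<rho> \<rho>' x" for x
    using rho_one[OF sp adm] rho_one[OF sp adm'] unfolding orbit_def
    by (intro CollectI exI[of _ "oone G"]) (simp add: inv_id)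
  show ?thesis unfolding union_of_intertwining_orbits_def
  proof (intro exI[of _ "Supp R"] conjI ballI)
    show "Supp R \<subseteq> Mset n' n" using R unfolding Supp_def Mset_def by auto
    show "orbit \<rho> \<rho>' x \<subseteq> I" if "x \<in> Supp R" for x using orb[OF that] sub by blast
    show "Supp R = \<Union> (orbit \<rho> \<rho>' ` Supp R)" using orb self by blast
  qed
qed

lemma uniq_obj:
  assumes sp: "special_2group G" and adm: "admissible G n \<rho> \<beta> c" and adm': "admissible G n' \<rho>' \<beta>' c'"
    and oi: "one_int PP G (Frep G n \<rho> \<beta> c) (Frep G n' \<rho>' \<beta>' c') f \<Phi>"
    and I: "Iset G n n' \<beta> \<beta>' = {}"
  shows "f = f0 n' n \<and> \<Phi> = Phi0"
proof -
  obtain R s where f: "f = (R, s)" by (cases f)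
  have f1: "is_1mor n n' (R,s)" using oi f unfolding one_int_def by simp
  then have R: "R \<in> carrier_mat n' n" unfolding is_1mor_def by simp
  have "Supp R = {}" using part2[OF sp adm adm' oi] I f by simp
  then have R0: "R = 0\<^sub>m n' n" using R unfolding Supp_def by (intro eq_matI) auto
  have s0: "s = (\<lambda>_ _. 1\<^sub>m 0)"
  proof (intro ext)
    fix i a
    show "s i a = 1\<^sub>m 0"
    proof (cases "i < n' \<and> a \<in> carrier_vec n")
      case True
      then have "s i a \<in> carrier_mat ((R *\<^sub>v a) $ i) ((R *\<^sub>v a) $ i)" using f1 unfolding is_1mor_def by auto
      moreover have "(R *\<^sub>v a) $ i = 0" using True R0 by simp
      ultimately show ?thesis by (intro mat00_eq) auto
    next
      case False
      then show ?thesis using f1 unfolding is_1mor_def by auto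
    qed
  qed
  have P0: "\<Phi> = Phi0"
  proof (intro ext)
    fix A i j
    have m: "is_2mor n' n (permmat n' (\<rho>' A) * R) (R * permmat n (\<rho> A)) (\<Phi> A)"
      using oi f unfolding one_int_def by simp
    show "\<Phi> A i j = 0\<^sub>m 0 0"
    proof (cases "i < n' \<and> j < n")
      case True
      then have "\<Phi> A i j \<in> carrier_mat ((R * permmat n (\<rho> A)) $$ (i,j)) ((permmat n' (\<rho>' A) * R) $$ (i,j))"
        using m unfolding is_2mor_def by blast
      moreover have "(R * permmat n (\<rho> A)) $$ (i,j) = 0" "(permmat n' (\<rho>' A) * R) $$ (i,j) = 0"
        using True R0 by (simp_all add: right_mult_zero_mat[of _ n' n'])
      ultimately show ?thesis by (intro c00) simp
    next
      case False
      then show ?thesis using m unfolding is_2mor_def by blast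
    qed
  qed
  show ?thesis using f R0 s0 P0 by simp
qed

lemma two_int_iff:
  "two_int PP (Frep G n \<rho> \<beta> c) (Frep G n' \<rho>' \<beta>' c') (f0 n' n, Phi0) (f0 n' n, Phi0) \<tau> \<longleftrightarrow> \<tau> = (\<lambda>_ _. 0\<^sub>m 0 0)"
proof
  assume "two_int PP (Frep G n \<rho> \<beta> c) (Frep G n' \<rho>' \<beta>' c') (f0 n' n, Phi0) (f0 n' n, Phi0) \<tau>"
  then have m: "is_2mor n' n (0\<^sub>m n' n) (0\<^sub>m n' n) \<tau>" unfolding two_int_def by simp
  show "\<tau> = (\<lambda>_ _. 0\<^sub>m 0 0)"
  proof (intro ext)
    fix i j
    show "\<tau> i j = 0\<^sub>m 0 0"
      using m unfolding is_2mor_def by (cases "i < n' \<and> j < n") (auto intro: c00)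
  qed
next
  assume t: "\<tau> = (\<lambda>_ _. 0\<^sub>m 0 0)"
  show "two_int PP (Frep G n \<rho> \<beta> c) (Frep G n' \<rho>' \<beta>' c') (f0 n' n, Phi0) (f0 n' n, Phi0) \<tau>"
    unfolding two_int_def prod.case
  proof (intro conjI allI)
    show "is_2mor (rdim (Frep G n' \<rho>' \<beta>' c')) (rdim (Frep G n \<rho> \<beta> c)) (fst (f0 n' n)) (fst (f0 n' n)) \<tau>"
      using t by (simp add: is_2mor_def)
    fix A
    have 1: "dim_col (hcomp (robj (Frep G n' \<rho>' \<beta>' c') A) X (f0 n' n) Y T1 T2 k j) = 0" for X Y T1 T2 k j
      by (rule hcomp_col0) (simp add: triv_gauge_zero)
    have 2: "dim_row (hcomp (f0 n' n) (f0 n' n) X Y T1 T2 k j) = 0" for X Y T1 T2 k j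
      by (rule hcomp_row0) simp
    show "vcomp (Phi0 A) (hcomp (robj (Frep G n' \<rho>' \<beta>' c') A) (robj (Frep G n' \<rho>' \<beta>' c') A) (f0 n' n) (f0 n' n)
            (id2 (fst (robj (Frep G n' \<rho>' \<beta>' c') A))) \<tau>) =
          vcomp (hcomp (f0 n' n) (f0 n' n) (robj (Frep G n \<rho> \<beta> c) A) (robj (Frep G n \<rho> \<beta> c) A) \<tau>
            (id2 (fst (robj (Frep G n \<rho> \<beta> c) A)))) (Phi0 A)"
      unfolding vcomp_def fun_eq_iff
    proof (intro allI mat00_eq)
      fix k j
      show "Phi0 A k j * hcomp (robj (Frep G n' \<rho>' \<beta>' c') A) (robj (Frep G n' \<rho>' \<beta>' c') A) (f0 n' n) (f0 n' n)
            (id2 (fst (robj (Frep G n' \<rho>' \<beta>' c') A))) \<tau> k j \<in> carrier_mat 0 0"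
        using 1 by (simp only: carrier_mat_def mem_Collect_eq index_mult_mat(2,3) index_zero_mat(2,3) simp_thms)
      show "hcomp (f0 n' n) (f0 n' n) (robj (Frep G n \<rho> \<beta> c) A) (robj (Frep G n \<rho> \<beta> c) A) \<tau>
            (id2 (fst (robj (Frep G n \<rho> \<beta> c) A))) k j * Phi0 A k j \<in> carrier_mat 0 0"
        using 2 by (simp only: carrier_mat_def mem_Collect_eq index_mult_mat(2,3) index_zero_mat(2,3) simp_thms)
    qed
  qed
qed

theorem mainTheorem10:
  fixes G :: "('g,'m) two_group"
    and n n' :: nat and \<rho> \<rho>' :: "'g \<Rightarrow> nat \<Rightarrow> nat"
    and \<beta> \<beta>' :: "'m \<Rightarrow> nat \<Rightarrow> complex" and c c' :: "'g \<Rightarrow> 'g \<Rightarrow> nat \<Rightarrow> complex"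
    and PP :: "nat vec \<Rightarrow> nat mat \<Rightarrow> nat vec \<Rightarrow> complex mat"
  assumes "special_2group G"
    and "admissible G n \<rho> \<beta> c"
    and "admissible G n' \<rho>' \<beta>' c'"
    and "PP_ok PP"
  shows "(\<forall>f \<Phi>. one_int PP G (Frep G n \<rho> \<beta> c) (Frep G n' \<rho>' \<beta>' c') f \<Phi> \<longrightarrow>
            rho_invariant \<rho> \<rho>' n n' (fst f) \<and>
            Supp (fst f) \<subseteq> Iset G n n' \<beta> \<beta>' \<and>
            union_of_intertwining_orbits \<rho> \<rho>' n n' (Iset G n n' \<beta> \<beta>') (Supp (fst f)))
         \<and> (Iset G n n' \<beta> \<beta>' = {} \<longrightarrow>
            int_category_terminal PP G (Frep G n \<rho> \<beta> c) (Frep G n' \<rho>' \<beta>' c'))"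
proof (intro conjI allI impI)
  fix f \<Phi> assume oi: "one_int PP G (Frep G n \<rho> \<beta> c) (Frep G n' \<rho>' \<beta>' c') f \<Phi>"
  show ri: "rho_invariant \<rho> \<rho>' n n' (fst f)" using part1[OF assms(2,3) oi] .
  show sb: "Supp (fst f) \<subseteq> Iset G n n' \<beta> \<beta>'" using part2[OF assms(1,2,3) oi] .
  have f1: "is_1mor n n' f" using oi unfolding one_int_def Frep_simps(1) by blast
  have R: "fst f \<in> carrier_mat n' n" using f1 unfolding is_1mor_def by (cases f) simp
  show "union_of_intertwining_orbits \<rho> \<rho>' n n' (Iset G n n' \<beta> \<beta>') (Supp (fst f))"
    using part3[OF assms(1,2,3) R ri sb] .
next
  assume I: "Iset G n n' \<beta> \<beta>' = {}"
  let ?O = "{(f, \<Phi>). one_int PP G (Frep G n \<rho> \<beta> c) (Frep G n' \<rho>' \<beta>' c') f \<Phi>}"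
  have O: "?O = {(f0 n' n, Phi0 :: 'g \<Rightarrow> arr)}"
  proof (intro equalityI subsetI)
    fix x assume "x \<in> ?O"
    then obtain f \<Phi> where x: "x = (f, \<Phi>)" and oi: "one_int PP G (Frep G n \<rho> \<beta> c) (Frep G n' \<rho>' \<beta>' c') f \<Phi>"
      by blast
    have "f = f0 n' n \<and> \<Phi> = Phi0" by (rule uniq_obj[OF assms(1,2,3) oi I])
    then show "x \<in> {(f0 n' n, Phi0 :: 'g \<Rightarrow> arr)}" using x by blast
  next
    fix x assume "x \<in> {(f0 n' n, Phi0 :: 'g \<Rightarrow> arr)}"
    then have x: "x = (f0 n' n, Phi0 :: 'g \<Rightarrow> arr)" by blast
    show "x \<in> ?O" unfolding x using exist_obj[of PP G n \<rho> \<beta> c n' \<rho>' \<beta>' c'] by blast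
  qed
  have H: "\<exists>!h. two_int PP (Frep G n \<rho> \<beta> c) (Frep G n' \<rho>' \<beta>' c') (f0 n' n, Phi0 :: 'g \<Rightarrow> arr) (f0 n' n, Phi0 :: 'g \<Rightarrow> arr) h"
    unfolding two_int_iff by blast
  show "int_category_terminal PP G (Frep G n \<rho> \<beta> c) (Frep G n' \<rho>' \<beta>' c')"
    unfolding int_category_terminal_def terminal_cat_def O
  proof (intro conjI ballI)
    show "\<exists>!x. x \<in> {(f0 n' n, Phi0 :: 'g \<Rightarrow> arr)}" by blast
    fix x y assume "x \<in> {(f0 n' n, Phi0 :: 'g \<Rightarrow> arr)}" "y \<in> {(f0 n' n, Phi0 :: 'g \<Rightarrow> arr)}"
    then have "x = (f0 n' n, Phi0 :: 'g \<Rightarrow> arr)" "y = (f0 n' n, Phi0 :: 'g \<Rightarrow> arr)" by blast+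
    then show "\<exists>!h. two_int PP (Frep G n \<rho> \<beta> c) (Frep G n' \<rho>' \<beta>' c') x y h" using H by simp
  qed
qed

end
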